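(* For every formula $\varphi$ of propositional linear temporal logic, $\mathrm{LTL} \models \neg \Box (\varphi\leftrightarrow \bigcirc\Box\diamondsuit \neg\varphi)$.
   Context: Propositional linear temporal logic (LTL) with the "next" modality $\bigcirc$, "always" modality $\Box$ and $\diamondsuit\varphi\equiv\neg\Box\neg\varphi$, interpreted over infinite sequences of states $\mathcal{K}=(\eta_0,\eta_1,\dots)$ with $\mathcal{K}_i(\bigcirc\varphi)=\mathcal{K}_{i+1}(\varphi)$, $\mathcal{K}_i(\Box\varphi)=\mathfrak{tt}$ iff $\mathcal{K}_j(\varphi)=\mathfrak{tt}$ for all $j\ge i$. $\mathrm{LTL}\models\varphi$ means validity in all temporal structures. Here $\bigcirc$ denotes the LTL "next" operator. *)

theory Defs
  imports Main
begin

datatype 'a ltl =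
    Atom 'a
  | FF
  | Neg "'a ltl"
  | Imp "'a ltl" "'a ltl"
  | And "'a ltl" "'a ltl"
  | Or "'a ltl" "'a ltl"
  | Next "'a ltl"
  | Always "'a ltl"

definition Iff :: "'a ltl \<Rightarrow> 'a ltl \<Rightarrow> 'a ltl" where
  "Iff p q = And (Imp p q) (Imp q p)"

definition Eventually :: "'a ltl \<Rightarrow> 'a ltl" where
  "Eventually p = Neg (Always (Neg p))"

type_synonym 'a tstruct = "nat \<Rightarrow> 'a \<Rightarrow> bool"

fun holds :: "'a tstruct \<Rightarrow> nat \<Rightarrow> 'a ltl \<Rightarrow> bool" where
  "holds K i (Atom v) = K i v"
| "holds K i FF = False"
| "holds K i (Neg p) = (\<not> holds K i p)"
| "holds K i (Imp p q) = (holds K i p \<longrightarrow> holds K i q)"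
| "holds K i (And p q) = (holds K i p \<and> holds K i q)"
| "holds K i (Or p q) = (holds K i p \<or> holds K i q)"
| "holds K i (Next p) = holds K (Suc i) p"
| "holds K i (Always p) = (\<forall>j\<ge>i. holds K j p)"

definition ltl_valid :: "'a ltl \<Rightarrow> bool" where
  "ltl_valid p = (\<forall>K i. holds K i p)"

end

theory Submission
  imports Defs
begin

lemma key:
  fixes P :: "nat \<Rightarrow> bool"
  assumes h: "\<forall>j\<ge>i. P j = (\<forall>k\<ge>Suc j. \<exists>l\<ge>k. \<not> P l)"
  shows False
proof (cases "P i")
  case True
  then have A: "\<forall>k\<ge>Suc i. \<exists>l\<ge>k. \<not> P l" using h by auto
  then obtain l where l: "l \<ge> Suc i" "\<not> P l" by auto
  then have "\<not> (\<forall>k\<ge>Suc l. \<exists>m\<ge>k. \<not> P m)" using h by auto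
  then show False using A l(1) by auto
next
  case False
  then obtain k where k: "k \<ge> Suc i" "\<forall>l\<ge>k. P l" using h by auto
  then have "\<forall>k'\<ge>Suc k. \<exists>m\<ge>k'. \<not> P m" using h by auto
  then show False using k by (meson le_Suc_eq le_trans order_refl)
qed

theorem mainTheorem5:
  fixes \<phi> :: "'a ltl"
  shows "ltl_valid (Neg (Always (Iff \<phi> (Next (Always (Eventually (Neg \<phi>)))))))"
  unfolding ltl_valid_def
proof (intro allI)
  fix K i
  show "holds K i (Neg (Always (Iff \<phi> (Next (Always (Eventually (Neg \<phi>)))))))"
  proof (simp only: holds.simps(3), rule notI)
    assume "holds K i (Always (Iff \<phi> (Next (Always (Eventually (Neg \<phi>))))))"
    then have "\<forall>j\<ge>i. holds K j \<phi> = (\<forall>k\<ge>Suc j. \<exists>l\<ge>k. \<not> holds K l \<phi>)"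
      by (auto simp: Iff_def Eventually_def)
    then show False by (rule key)
  qed
qed

end
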